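(* Let $G=(U,V,E)$ be a path restricted ordered bipartite graph and let $v$ be any vertex of $G$. Let $T_r(v)$ be the subgraph formed by the union of all forward paths starting at $v$ whose vertices decrease in order (i.e., read from $v$, the $U$-vertices strictly decrease and the $V$-vertices strictly decrease). Then the subgraph of $G$ induced by the vertex set of $T_r(v)$ has exactly $N-1$ edges, where $N$ is the number of vertices of $T_r(v)$; i.e., this induced subgraph coincides with $T_r(v)$ and is a tree.
   Context: An ordered bipartite graph $G=(U,V,E)$ consists of disjoint finite sets $U,V$, each totally ordered, and $E\subseteq U\times V$. A forward path is a sequence $w_0,\dots,w_m$ of distinct vertices alternating between $U$ and $V$, consecutive ones adjacent, such that the $U$-vertices appear in strictly increasing order and the $V$-vertices appear in strictly increasing order along the sequence (or, read in reverse, both strictly decreasing). A back edge to a forward path $w_0,\dots,w_m$ (written in increasing direction) is an edge $\{w_0,x\}\in E$ with $x$ in the part not containing $w_0$ and $w_1<x\le M$, where $M$ is the largest vertex of the path in that part. $G$ is a path restricted ordered bipartite graph if no forward path has a back edge. *)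

theory Defs
  imports Main
begin

text \<open>An ordered bipartite graph (U, V, E): U and V are finite subsets of linearly
ordered types 'a and 'b; vertices are represented in the disjoint sum 'a + 'b
(Inl for U-vertices, Inr for V-vertices); E is a subset of U x V.\<close>

definition ordered_bipartite :: "'a::linorder set \<Rightarrow> 'b::linorder set \<Rightarrow> ('a \<times> 'b) set \<Rightarrow> bool" where
  "ordered_bipartite U V E \<longleftrightarrow> finite U \<and> finite V \<and> E \<subseteq> U \<times> V"

definition verts :: "'a set \<Rightarrow> 'b set \<Rightarrow> ('a + 'b) set" where
  "verts U V = Inl ` U \<union> Inr ` V"

fun adj :: "('a \<times> 'b) set \<Rightarrow> 'a + 'b \<Rightarrow> 'a + 'b \<Rightarrow> bool" where
  "adj E (Inl u) (Inr w) = ((u, w) \<in> E)"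
| "adj E (Inr w) (Inl u) = ((u, w) \<in> E)"
| "adj E _ _ = False"

fun vless :: "'a::linorder + 'b::linorder \<Rightarrow> 'a + 'b \<Rightarrow> bool" where
  "vless (Inl a) (Inl b) = (a < b)"
| "vless (Inr a) (Inr b) = (a < b)"
| "vless _ _ = False"

fun vle :: "'a::linorder + 'b::linorder \<Rightarrow> 'a + 'b \<Rightarrow> bool" where
  "vle (Inl a) (Inl b) = (a \<le> b)"
| "vle (Inr a) (Inr b) = (a \<le> b)"
| "vle _ _ = False"

definition lefts :: "('a + 'b) list \<Rightarrow> 'a list" where
  "lefts ws = concat (map (case_sum (\<lambda>u. [u]) (\<lambda>_. [])) ws)"

definition rights :: "('a + 'b) list \<Rightarrow> 'b list" where
  "rights ws = concat (map (case_sum (\<lambda>_. []) (\<lambda>w. [w])) ws)"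

definition inc_path :: "'a::linorder set \<Rightarrow> 'b::linorder set \<Rightarrow> ('a \<times> 'b) set \<Rightarrow> ('a + 'b) list \<Rightarrow> bool" where
  "inc_path U V E ws \<longleftrightarrow> ws \<noteq> [] \<and> set ws \<subseteq> verts U V \<and> distinct ws \<and>
     (\<forall>i. Suc i < length ws \<longrightarrow> adj E (ws ! i) (ws ! Suc i)) \<and>
     sorted_wrt (<) (lefts ws) \<and> sorted_wrt (<) (rights ws)"

definition forward_path :: "'a::linorder set \<Rightarrow> 'b::linorder set \<Rightarrow> ('a \<times> 'b) set \<Rightarrow> ('a + 'b) list \<Rightarrow> bool" where
  "forward_path U V E ws \<longleftrightarrow> inc_path U V E ws \<or> inc_path U V E (rev ws)"

text \<open>A back edge to an increasing forward path w0,...,wm: an edge {w0, x} with x in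
the part not containing w0 and w1 < x \<le> M, M the largest path vertex in that part.\<close>
definition has_back_edge :: "'a::linorder set \<Rightarrow> 'b::linorder set \<Rightarrow> ('a \<times> 'b) set \<Rightarrow> ('a + 'b) list \<Rightarrow> bool" where
  "has_back_edge U V E ws \<longleftrightarrow> length ws \<ge> 2 \<and>
     (\<exists>x \<in> verts U V. adj E (ws ! 0) x \<and> vless (ws ! 1) x \<and> (\<exists>z \<in> set ws. vle x z))"

definition path_restricted :: "'a::linorder set \<Rightarrow> 'b::linorder set \<Rightarrow> ('a \<times> 'b) set \<Rightarrow> bool" where
  "path_restricted U V E \<longleftrightarrow> ordered_bipartite U V E \<and>
     (\<forall>ws. inc_path U V E ws \<longrightarrow> \<not> has_back_edge U V E ws)"

definition dec_paths_from :: "'a::linorder set \<Rightarrow> 'b::linorder set \<Rightarrow> ('a \<times> 'b) set \<Rightarrow> 'a + 'b \<Rightarrow> ('a + 'b) list set" where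
  "dec_paths_from U V E v = {ws. inc_path U V E (rev ws) \<and> hd ws = v}"

definition Tr_verts :: "'a::linorder set \<Rightarrow> 'b::linorder set \<Rightarrow> ('a \<times> 'b) set \<Rightarrow> 'a + 'b \<Rightarrow> ('a + 'b) set" where
  "Tr_verts U V E v = (\<Union>ws \<in> dec_paths_from U V E v. set ws)"

definition Tr_edges :: "'a::linorder set \<Rightarrow> 'b::linorder set \<Rightarrow> ('a \<times> 'b) set \<Rightarrow> 'a + 'b \<Rightarrow> ('a \<times> 'b) set" where
  "Tr_edges U V E v = {(u, w). \<exists>ws \<in> dec_paths_from U V E v. \<exists>i. Suc i < length ws \<and>
      {ws ! i, ws ! Suc i} = {Inl u, Inr w}}"

definition induced_edges :: "('a \<times> 'b) set \<Rightarrow> ('a + 'b) set \<Rightarrow> ('a \<times> 'b) set" where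
  "induced_edges E S = {(u, w) \<in> E. Inl u \<in> S \<and> Inr w \<in> S}"

end

theory Submission
  imports Defs
begin

definition SR :: "'a::linorder + 'b::linorder \<Rightarrow> 'a + 'b \<Rightarrow> bool" where
  "SR x y = (isl x = isl y \<longrightarrow> vless x y)"

definition DR :: "'a::linorder + 'b::linorder \<Rightarrow> 'a + 'b \<Rightarrow> bool" where
  "DR x y = (isl x = isl y \<longrightarrow> vless y x)"

lemma set_lefts: "set (lefts ws) = {a. Inl a \<in> set ws}"
  by (induction ws) (auto simp: lefts_def split: sum.splits)

lemma set_rights: "set (rights ws) = {a. Inr a \<in> set ws}"
  by (induction ws) (auto simp: rights_def split: sum.splits)

lemma lefts_Cons: "lefts (x # ws) = (case x of Inl a \<Rightarrow> a # lefts ws | Inr _ \<Rightarrow> lefts ws)"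
  by (simp add: lefts_def split: sum.splits)

lemma rights_Cons: "rights (x # ws) = (case x of Inl a \<Rightarrow> rights ws | Inr b \<Rightarrow> b # rights ws)"
  by (simp add: rights_def split: sum.splits)

lemma sorted_lr:
  "(sorted_wrt (<) (lefts ws) \<and> sorted_wrt (<) (rights ws)) \<longleftrightarrow> sorted_wrt SR ws"
proof (induction ws)
  case Nil
  then show ?case by (simp add: lefts_def rights_def)
next
  case (Cons x ws)
  show ?case
  proof (cases x)
    case (Inl a)
    have "(\<forall>y\<in>set ws. SR x y) \<longleftrightarrow> (\<forall>b\<in>set (lefts ws). a < b)"
      unfolding set_lefts using Inl
      apply (auto simp: SR_def)
      subgoal for y by (cases y) auto
      done
    then show ?thesis using Cons Inl by (auto simp: lefts_Cons rights_Cons)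
  next
    case (Inr a)
    have "(\<forall>y\<in>set ws. SR x y) \<longleftrightarrow> (\<forall>b\<in>set (rights ws). a < b)"
      unfolding set_rights using Inr
      apply (auto simp: SR_def)
      subgoal for y by (cases y) auto
      done
    then show ?thesis using Cons Inr by (auto simp: lefts_Cons rights_Cons)
  qed
qed

lemma vless_irrefl: "\<not> vless x x"
  by (cases x) auto

lemma vle_refl: "vle x x"
  by (cases x) auto

lemma vless_isl: "vless x y \<Longrightarrow> isl x = isl y"
  by (cases x; cases y) auto

lemma vless_trans: "vless x y \<Longrightarrow> vless y z \<Longrightarrow> vless x z"
  by (cases x; cases y; cases z) auto

lemma vless_imp_vle: "vless x y \<Longrightarrow> vle x y"
  by (cases x; cases y) auto

lemma not_vle: "isl x = isl y \<Longrightarrow> \<not> vle x y \<Longrightarrow> vless y x"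
  by (cases x; cases y) auto

lemma vless_antisym: "isl x = isl y \<Longrightarrow> \<not> vless x y \<Longrightarrow> \<not> vless y x \<Longrightarrow> x = y"
  by (cases x; cases y) auto

lemma adj_sym: "adj E x y = adj E y x"
  by (cases x; cases y) auto

lemma adj_isl: "adj E x y \<Longrightarrow> isl x \<noteq> isl y"
  by (cases x; cases y) auto

lemma sorted_DR_distinct: "sorted_wrt DR P \<Longrightarrow> distinct P"
  by (induction P) (auto simp: DR_def vless_irrefl)

lemma sorted_SR_distinct: "sorted_wrt SR P \<Longrightarrow> distinct P"
  by (induction P) (auto simp: SR_def vless_irrefl)

lemma inc_path_iff:
  "inc_path U V E ws \<longleftrightarrow> ws \<noteq> [] \<and> set ws \<subseteq> verts U V \<and> successively (adj E) ws \<and> sorted_wrt SR ws"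
  unfolding inc_path_def sorted_lr successively_conv_nth
  using sorted_SR_distinct by blast

lemma dpath_iff:
  "inc_path U V E (rev P) \<longleftrightarrow> P \<noteq> [] \<and> set P \<subseteq> verts U V \<and> successively (adj E) P \<and> sorted_wrt DR P"
proof -
  have 1: "(\<lambda>x y. adj E y x) = adj E" by (intro ext) (rule adj_sym)
  have 2: "(\<lambda>x y. SR y x) = DR" by (intro ext) (auto simp: SR_def DR_def)
  show ?thesis
    unfolding inc_path_iff sorted_wrt_rev successively_rev set_rev 1 2 by simp
qed

fun epair :: "'a + 'b \<Rightarrow> 'a + 'b \<Rightarrow> 'a \<times> 'b" where
  "epair (Inl a) (Inr b) = (a, b)"
| "epair (Inr b) (Inl a) = (a, b)"
| "epair _ _ = undefined"

lemma epair_set: "adj E x y \<Longrightarrow> epair x y = (a, b) \<Longrightarrow> {x, y} = {Inl a, Inr b}"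
  by (cases x; cases y) auto

lemma epair_E: "adj E x y \<Longrightarrow> epair x y \<in> E"
  by (cases x; cases y) auto

lemma epair_eq: "adj E x y \<Longrightarrow> adj E x' y' \<Longrightarrow> epair x y = epair x' y' \<Longrightarrow>
   (x = x' \<and> y = y') \<or> (x = y' \<and> y = x')"
  by (cases x; cases y; cases x'; cases y') auto

lemma backL:
  assumes hpr: "path_restricted U V E" and P: "inc_path U V E (rev P)" and len: "length P \<ge> 2"
    and a: "adj E (last P) y" and y: "y \<in> verts U V" and z: "z \<in> set P" "vle y z"
  shows "\<not> vless (P ! (length P - 2)) y"
proof
  assume h: "vless (P ! (length P - 2)) y"
  have "\<not> has_back_edge U V E (rev P)" using hpr P by (auto simp: path_restricted_def)
  moreover have "rev P ! 0 = last P"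
  proof -
    have "rev P \<noteq> []" using len by auto
    thus ?thesis by (simp add: hd_conv_nth[symmetric] hd_rev)
  qed
  moreover have "rev P ! 1 = P ! (length P - 2)" using len by (subst rev_nth) (auto simp: numeral_2_eq_2)
  ultimately show False using len a y z h by (auto simp: has_back_edge_def)
qed


lemma vless_vle_trans: "vless x y \<Longrightarrow> vle y z \<Longrightarrow> vless x z"
  by (cases x; cases y; cases z) auto

lemma vless_neq: "isl x = isl y \<Longrightarrow> \<not> vless x y \<Longrightarrow> x \<noteq> y \<Longrightarrow> vless y x"
  by (cases x; cases y) auto

locale PRG =
  fixes U :: "'a::linorder set" and V :: "'b::linorder set" and E :: "('a \<times> 'b) set"
    and v :: "'a + 'b"
  assumes hpr: "path_restricted U V E" and vin: "v \<in> verts U V"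
begin

abbreviation "T \<equiv> Tr_verts U V E v"
abbreviation "D \<equiv> dec_paths_from U V E v"

lemma D_iff: "P \<in> D \<longleftrightarrow> P \<noteq> [] \<and> hd P = v \<and> set P \<subseteq> verts U V \<and> successively (adj E) P \<and> sorted_wrt DR P"
  unfolding dec_paths_from_def mem_Collect_eq dpath_iff by blast

lemma D_nth0: "P \<in> D \<Longrightarrow> P ! 0 = v"
  by (simp add: D_iff hd_conv_nth[symmetric])

lemma in_T: "P \<in> D \<Longrightarrow> x \<in> set P \<Longrightarrow> x \<in> T"
  by (auto simp: Tr_verts_def)

lemma T_sub: "T \<subseteq> verts U V"
  by (auto simp: Tr_verts_def D_iff)

lemma T_fin: "finite T"
proof -
  have "finite U" "finite V" using hpr
    unfolding path_restricted_def ordered_bipartite_def by blast+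
  hence "finite (verts U V)" by (simp add: verts_def)
  thus ?thesis using T_sub finite_subset by blast
qed

lemma v_T: "v \<in> T"
proof -
  have "[v] \<in> D" using vin by (simp add: D_iff)
  thus ?thesis using in_T by force
qed

lemma last_v: assumes "P \<in> D" "last P = v" shows "length P = 1"
proof (rule ccontr)
  assume "length P \<noteq> 1"
  moreover have "P \<noteq> []" using assms by (simp add: D_iff)
  ultimately have l: "0 < length P - 1" "length P - 1 < length P" by (cases P; auto)+
  have "sorted_wrt DR P" using assms by (simp add: D_iff)
  from sorted_wrt_nth_less[OF this l] have "DR (P!0) (P!(length P - 1))" .
  moreover have "P!(length P - 1) = v" using assms \<open>P \<noteq> []\<close> by (simp add: last_conv_nth)
  ultimately show False using D_nth0[OF assms(1)] by (simp add: DR_def vless_irrefl)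
qed

lemma take_D: assumes "P \<in> D" "0 < k" shows "take k P \<in> D"
proof -
  have "successively (adj E) (take k P @ drop k P)" using assms by (simp add: D_iff)
  hence h1: "successively (adj E) (take k P)" by (simp only: successively_append_iff)
  have d: "P \<noteq> []" "hd P = v" "set P \<subseteq> verts U V" "sorted_wrt DR P"
    using assms(1) unfolding D_iff by blast+
  have h2: "take k P \<noteq> []" using assms(2) d(1) by simp
  have h3: "hd (take k P) = v" using assms(2) d(2) by simp
  have h4: "set (take k P) \<subseteq> verts U V" using d(3) set_take_subset[of k P] by blast
  have h5: "sorted_wrt DR (take k P)" using d(4) by simp
  show ?thesis by (simp only: D_iff) (intro conjI h1 h2 h3 h4 h5)
qed

lemma snoc_D: assumes "P \<in> D" "adj E (last P) y" "y \<in> verts U V"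
  "\<forall>z\<in>set P. isl z = isl y \<longrightarrow> vless y z"
  shows "P @ [y] \<in> D"
  using assms by (auto simp: D_iff successively_append_iff sorted_wrt_append DR_def)

lemma adj_last: assumes "P \<in> D" "length P \<ge> 2" shows "adj E (P!(length P - 2)) (last P)"
proof -
  have "successively (adj E) P" using assms by (simp add: D_iff)
  from successively_nth[OF this, of "length P - 2"] assms
  have "adj E (P ! (length P - 2)) (P ! Suc (length P - 2))" by simp
  moreover have "Suc (length P - 2) = length P - 1" using assms by simp
  moreover have "P \<noteq> []" using assms by auto
  ultimately show ?thesis by (simp add: last_conv_nth)
qed

lemma lemC:
  assumes P: "P \<in> D" and len: "length P \<ge> 2" and yT: "y \<in> T" and a: "adj E (last P) y"
  shows "\<not> vless (P!(length P - 2)) y"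
proof -
  obtain Q where Q: "Q \<in> D" "y \<in> set Q" using yT by (auto simp: Tr_verts_def)
  have yv: "y \<in> verts U V" using yT T_sub by blast
  have Pinc: "inc_path U V E (rev P)" using P by (simp add: dec_paths_from_def)
  show ?thesis
  proof (cases "\<exists>z\<in>set P. vle y z")
    case True
    then obtain z where "z \<in> set P" "vle y z" by blast
    from backL[OF hpr Pinc len a yv this] show ?thesis .
  next
    case False
    have Pne: "P \<noteq> []" using P by (simp add: D_iff)
    have vP: "v \<in> set P" using P Pne by (auto simp: D_iff)
    hence nv: "\<not> vle y v" using False by blast
    obtain j where j: "j < length Q" "Q ! j = y" using Q(2) by (auto simp: in_set_conv_nth)
    have Q0: "Q ! 0 = v" using D_nth0[OF Q(1)] .
    have j0: "j \<noteq> 0" using j Q0 nv vle_refl by metis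
    have Qs: "sorted_wrt DR Q" "successively (adj E) Q" using Q(1) by (auto simp: D_iff)
    define q where "q = Q ! 1"
    have l1: "1 < length Q" using j j0 by simp
    have avq: "adj E v q" using successively_nth[OF Qs(2), of 0] l1 Q0 q_def by simp
    have qv: "q \<in> verts U V" using Q(1) l1 q_def by (auto simp: D_iff)
    have iyv: "isl y \<noteq> isl v"
    proof
      assume "isl y = isl v"
      moreover have "DR (Q!0) (Q!j)" using sorted_wrt_nth_less[OF Qs(1), of 0 j] j j0 by simp
      ultimately have "vless y v" using Q0 j by (simp add: DR_def)
      thus False using nv vless_imp_vle by blast
    qed
    have iqv: "isl q \<noteq> isl v" using adj_isl[OF avq] by simp
    have iyq: "isl y = isl q" using iyv iqv by auto
    have yq: "vle y q"
    proof (cases "j = 1")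
      case True thus ?thesis using j q_def vle_refl by simp
    next
      case False
      hence "DR (Q!1) (Q!j)" using sorted_wrt_nth_less[OF Qs(1), of 1 j] j j0 by simp
      thus ?thesis using iyq j q_def vless_imp_vle by (simp add: DR_def)
    qed
    have qgt: "\<forall>z\<in>set P. isl q = isl z \<longrightarrow> vless z q"
    proof (intro ballI impI)
      fix z assume z: "z \<in> set P" "isl q = isl z"
      have "\<not> vle y z" using False z by blast
      hence "vless z y" using not_vle iyq z by metis
      thus "vless z q" using yq vless_vle_trans by blast
    qed
    have "inc_path U V E (rev (q # P))"
      unfolding dpath_iff
    proof (intro conjI)
      show "set (q # P) \<subseteq> verts U V" using qv P by (auto simp: D_iff)
      show "successively (adj E) (q # P)"
        using Pne P avq adj_sym[of E q v] by (auto simp: D_iff successively_Cons)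
      show "sorted_wrt DR (q # P)" using P qgt by (auto simp: D_iff DR_def)
    qed simp
    moreover have "length (q # P) \<ge> 2" using len by simp
    moreover have "adj E (last (q # P)) y" using a Pne by simp
    moreover have "q \<in> set (q # P)" by simp
    ultimately have "\<not> vless ((q # P) ! (length (q # P) - 2)) y"
      using backL[OF hpr _ _ _ yv _ yq] by blast
    moreover have "(q # P) ! (length (q # P) - 2) = P ! (length P - 2)"
    proof -
      have "length (q # P) - 2 = Suc (length P - 2)" using len by simp
      thus ?thesis by simp
    qed
    ultimately show ?thesis by simp
  qed
qed

definition isp :: "'a + 'b \<Rightarrow> 'a + 'b \<Rightarrow> bool" where
  "isp w p \<longleftrightarrow> (\<exists>P\<in>D. length P \<ge> 2 \<and> last P = w \<and> P ! (length P - 2) = p)"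

lemma isp_props: assumes "isp w p" shows "p \<in> T" "w \<in> T" "adj E w p" "w \<noteq> v"
proof -
  obtain P where P: "P \<in> D" "length P \<ge> 2" "last P = w" "P ! (length P - 2) = p"
    using assms by (auto simp: isp_def)
  have "length P - 2 < length P" using P(2) by simp
  hence "P ! (length P - 2) \<in> set P" by (rule nth_mem)
  thus "p \<in> T" using P(4) in_T[OF P(1)] by simp
  have "P \<noteq> []" using P(2) by auto
  hence "last P \<in> set P" by (rule last_in_set)
  thus "w \<in> T" using P(3) in_T[OF P(1)] by simp
  show "adj E w p" using adj_last[OF P(1,2)] P adj_sym by metis
  show "w \<noteq> v" using last_v[OF P(1)] P by auto
qed

lemma isp_unique: assumes "isp w p" "isp w p'" shows "p = p'"
proof -
  obtain P where P: "P \<in> D" "length P \<ge> 2" "last P = w" "P ! (length P - 2) = p"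
    using assms by (auto simp: isp_def)
  obtain P' where P': "P' \<in> D" "length P' \<ge> 2" "last P' = w" "P' ! (length P' - 2) = p'"
    using assms by (auto simp: isp_def)
  have 1: "\<not> vless p p'" using lemC[OF P(1,2) isp_props(1)[OF assms(2)]] P isp_props(3)[OF assms(2)] by simp
  have 2: "\<not> vless p' p" using lemC[OF P'(1,2) isp_props(1)[OF assms(1)]] P' isp_props(3)[OF assms(1)] by simp
  have "isl p \<noteq> isl w" "isl p' \<noteq> isl w" using adj_isl isp_props(3) assms by metis+
  hence "isl p = isl p'" by auto
  thus ?thesis using vless_antisym 1 2 by blast
qed

definition par :: "'a + 'b \<Rightarrow> 'a + 'b" where
  "par w = (THE p. isp w p)"

lemma par_eq: "isp w p \<Longrightarrow> par w = p"
  unfolding par_def by (rule the_equality) (auto intro: isp_unique)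

lemma isp_ex: assumes "w \<in> T" "w \<noteq> v" shows "isp w (par w)"
proof -
  obtain P where P: "P \<in> D" "w \<in> set P" using assms(1) unfolding Tr_verts_def by blast
  obtain j where j: "j < length P" "P ! j = w" using P(2) by (auto simp: in_set_conv_nth)
  have j0: "j \<noteq> 0"
  proof
    assume "j = 0"
    hence "w = v" using j D_nth0[OF P(1)] by simp
    thus False using assms(2) by simp
  qed
  have tD: "take (Suc j) P \<in> D" using take_D[OF P(1)] by simp
  have lt: "length (take (Suc j) P) = Suc j" using j by simp
  have ne: "take (Suc j) P \<noteq> []" using j by (cases P) auto
  have "last (take (Suc j) P) = take (Suc j) P ! j" using last_conv_nth[OF ne] lt by simp
  hence l1: "last (take (Suc j) P) = w" using j by simp
  have l2: "take (Suc j) P ! (length (take (Suc j) P) - 2) = P ! (j - 1)" using j j0 lt by simp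
  have l3: "length (take (Suc j) P) \<ge> 2" using lt j0 by simp
  have "isp w (P ! (j - 1))" unfolding isp_def using tD l1 l2 l3 by blast
  thus ?thesis using par_eq by simp
qed

definition g :: "'a + 'b \<Rightarrow> 'a \<times> 'b" where
  "g w = epair w (par w)"

lemma g_in: assumes "w \<in> T" "w \<noteq> v" shows "g w \<in> induced_edges E T"
proof -
  have i: "isp w (par w)" using isp_ex assms by blast
  obtain a b where ab: "g w = (a, b)" by (cases "g w")
  have ep: "epair w (par w) = (a, b)" using ab unfolding g_def .
  have st: "{w, par w} = {Inl a, Inr b}" using epair_set[OF isp_props(3)[OF i] ep] .
  have "Inl a \<in> {w, par w}" "Inr b \<in> {w, par w}" unfolding st by simp_all
  moreover have "w \<in> T" "par w \<in> T" using isp_props[OF i] by auto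
  ultimately have "Inl a \<in> T" "Inr b \<in> T" by auto
  moreover have "g w \<in> E" using epair_E[OF isp_props(3)[OF i]] unfolding g_def .
  ultimately show ?thesis using ab by (simp add: induced_edges_def)
qed

lemma g_inj: "inj_on g (T - {v})"
proof (rule inj_onI)
  fix w1 w2 assume w1: "w1 \<in> T - {v}" and w2: "w2 \<in> T - {v}" and eq: "g w1 = g w2"
  have i1: "isp w1 (par w1)" and i2: "isp w2 (par w2)" using isp_ex w1 w2 by auto
  from epair_eq[OF isp_props(3)[OF i1] isp_props(3)[OF i2]] eq
  have "w1 = w2 \<or> (w1 = par w2 \<and> par w1 = w2)" unfolding g_def by blast
  thus "w1 = w2"
  proof
    assume h: "w1 = par w2 \<and> par w1 = w2"
    obtain P where P: "P \<in> D" "length P \<ge> 2" "last P = w2" "P ! (length P - 2) = w1"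
      using i2 h by (auto simp: isp_def)
    define n where "n = length P"
    have tD: "take (n - 1) P \<in> D" using take_D[OF P(1)] P(2) n_def by simp
    have lt: "length (take (n - 1) P) = n - 1" using n_def by simp
    have lst: "last (take (n - 1) P) = w1"
    proof -
      have ne: "take (n - 1) P \<noteq> []" using P(2) n_def by (cases P) auto
      have e1: "length (take (n - 1) P) - 1 = n - 2" using lt by simp
      have "last (take (n - 1) P) = take (n - 1) P ! (n - 2)" using last_conv_nth[OF ne] e1 by simp
      also have "\<dots> = P ! (n - 2)" using P(2) n_def by simp
      finally show ?thesis using P(4) n_def by simp
    qed
    have "n - 1 \<noteq> 1"
    proof
      assume h1: "n - 1 = 1"
      have ne: "take (n - 1) P \<noteq> []" using P(2) n_def by (cases P) auto
      have "last (take (n - 1) P) = take (n - 1) P ! 0" using last_conv_nth[OF ne] lt h1 by simp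
      hence "w1 = v" using D_nth0[OF tD] lst by simp
      thus False using w1 by simp
    qed
    hence n3: "n \<ge> 3" using P(2) n_def by simp
    have "take (n - 1) P ! (n - 1 - 2) = P ! (n - 3)" using n3 by (simp add: numeral_3_eq_3)
    hence "isp w1 (P ! (n - 3))" unfolding isp_def using tD lt lst n3
      by (intro bexI[of _ "take (n - 1) P"]) auto
    hence "par w1 = P ! (n - 3)" using par_eq by simp
    moreover have "w2 = P ! (n - 1)" using P n_def last_conv_nth[of P] by (cases P) auto
    moreover have "distinct P" using P(1) sorted_DR_distinct unfolding D_iff by blast
    ultimately have "P ! (n - 3) = P ! (n - 1)" using h by metis
    hence "n - 3 = n - 1" using nth_eq_iff_index_eq[OF \<open>distinct P\<close>, of "n - 3" "n - 1"] n3 n_def by simp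
    thus ?thesis using n3 by simp
  qed
qed

lemma surj_g: "induced_edges E T \<subseteq> g ` (T - {v})"
proof
  fix e assume e: "e \<in> induced_edges E T"
  then obtain a b where ab: "e = (a, b)" "(a, b) \<in> E" "Inl a \<in> T" "Inr b \<in> T"
    by (auto simp: induced_edges_def)
  define x :: "'a + 'b" where "x = Inl a"
  define y :: "'a + 'b" where "y = Inr b"
  have axy: "adj E x y" using ab x_def y_def by simp
  show "e \<in> g ` (T - {v})"
  proof (cases "y \<noteq> v \<and> par y = x")
    case True
    hence "g y = e" using ab x_def y_def g_def by simp
    thus ?thesis using True ab y_def by blast
  next
    case False
    have xv: "x \<noteq> v"
    proof
      assume xv: "x = v"
      have "[v, y] \<in> D" using xv axy T_sub ab vin y_def adj_isl[OF axy]
        by (auto simp: D_iff DR_def)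
      hence "isp y v" unfolding isp_def by (intro bexI[of _ "[v, y]"]) auto
      hence "par y = x" "y \<noteq> v" using par_eq xv isp_props by auto
      thus False using False by blast
    qed
    have ix: "isp x (par x)" using isp_ex xv ab x_def by simp
    obtain P where P: "P \<in> D" "length P \<ge> 2" "last P = x" "P ! (length P - 2) = par x"
      using ix by (auto simp: isp_def)
    have np: "\<not> vless (par x) y" using lemC[OF P(1,2)] P ab y_def axy by simp
    have "isl (par x) = isl y" using adj_isl[OF axy] adj_isl[OF isp_props(3)[OF ix]] by auto
    show ?thesis
    proof (cases "par x = y")
      case True
      hence "g x = e" using ab x_def y_def g_def by simp
      thus ?thesis using xv ab x_def by blast
    next
      case ne: False
      have ylt: "vless y (par x)" using vless_neq[OF \<open>isl (par x) = isl y\<close> np ne] .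
      have "\<forall>z\<in>set P. isl z = isl y \<longrightarrow> vless y z"
      proof (intro ballI impI)
        fix z assume z: "z \<in> set P" "isl z = isl y"
        then obtain i where i: "i < length P" "P ! i = z" by (auto simp: in_set_conv_nth)
        have "P \<noteq> []" using P by auto
        have "i \<noteq> length P - 1" using i z P adj_isl[OF axy] \<open>P \<noteq> []\<close> by (auto simp: last_conv_nth)
        hence "i < length P - 2 \<or> i = length P - 2" using i by linarith
        thus "vless y z"
        proof
          assume "i = length P - 2" thus ?thesis using P i ylt by simp
        next
          assume il: "i < length P - 2"
          have "sorted_wrt DR P" using P by (simp add: D_iff)
          from sorted_wrt_nth_less[OF this il] have "DR z (par x)" using P i by simp
          hence "vless (par x) z" using z \<open>isl (par x) = isl y\<close> by (simp add: DR_def)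
          thus ?thesis using ylt vless_trans by blast
        qed
      qed
      hence PD: "P @ [y] \<in> D" using snoc_D[OF P(1)] P axy T_sub ab y_def by auto
      have Pne: "P \<noteq> []" using P(2) by (cases P) auto
      have "(P @ [y]) ! (length (P @ [y]) - 2) = P ! (length P - 1)"
        using Pne by (simp add: nth_append)
      also have "\<dots> = x" using last_conv_nth[OF Pne] P(3) by simp
      finally have "(P @ [y]) ! (length (P @ [y]) - 2) = x" .
      hence "isp y x" unfolding isp_def using PD P by (intro bexI[of _ "P @ [y]"]) auto
      hence "par y = x" "y \<noteq> v" using par_eq isp_props by auto
      thus ?thesis using False by blast
    qed
  qed
qed

lemma Tr_sub: "Tr_edges U V E v \<subseteq> induced_edges E T"
proof
  fix e assume "e \<in> Tr_edges U V E v"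
  then obtain u w ws i where e: "e = (u, w)" "ws \<in> D" "Suc i < length ws"
    "{ws ! i, ws ! Suc i} = {Inl u, Inr w}"
    by (auto simp: Tr_edges_def)
  have "ws ! i \<in> T" "ws ! Suc i \<in> T" using e in_T by auto
  moreover have "adj E (ws ! i) (ws ! Suc i)" using e successively_nth by (auto simp: D_iff)
  ultimately show "e \<in> induced_edges E T" using e(1,4)
    by (auto simp: induced_edges_def doubleton_eq_iff)
qed

lemma g_sub: "g ` (T - {v}) \<subseteq> Tr_edges U V E v"
proof
  fix e assume "e \<in> g ` (T - {v})"
  then obtain w where w: "w \<in> T" "w \<noteq> v" "e = g w" by auto
  have i: "isp w (par w)" using isp_ex w by blast
  obtain a b where ab: "e = (a, b)" by (cases e)
  have st: "{w, par w} = {Inl a, Inr b}" using epair_set[OF isp_props(3)[OF i]] ab w g_def by simp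
  obtain P where P: "P \<in> D" "length P \<ge> 2" "last P = w" "P ! (length P - 2) = par w"
    using i by (auto simp: isp_def)
  have "Suc (length P - 2) = length P - 1" using P(2) by simp
  moreover have "P \<noteq> []" using P(2) by auto
  ultimately have "P ! Suc (length P - 2) = w" using P(3) by (simp add: last_conv_nth)
  hence "{P ! (length P - 2), P ! Suc (length P - 2)} = {Inl a, Inr b}" using st P by auto
  moreover have "Suc (length P - 2) < length P" using P by simp
  ultimately show "e \<in> Tr_edges U V E v" using P ab unfolding Tr_edges_def by blast
qed

lemma main: "card (induced_edges E T) = card T - 1 \<and> induced_edges E T = Tr_edges U V E v"
proof -
  have "g ` (T - {v}) \<subseteq> induced_edges E T" using g_in by blast
  hence eq: "induced_edges E T = g ` (T - {v})" using surj_g by (rule subset_antisym[rotated])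
  have "card (induced_edges E T) = card (T - {v})" using eq card_image g_inj by metis
  also have "\<dots> = card T - 1" using v_T T_fin by simp
  finally show ?thesis using eq Tr_sub g_sub by auto
qed

end

theorem lemma3p3:
  fixes U :: "'a::linorder set" and V :: "'b::linorder set" and E :: "('a \<times> 'b) set"
    and v :: "'a + 'b"
  assumes "path_restricted U V E"
    and "v \<in> verts U V"
  shows "card (induced_edges E (Tr_verts U V E v)) = card (Tr_verts U V E v) - 1
         \<and> induced_edges E (Tr_verts U V E v) = Tr_edges U V E v"
  using PRG.main[OF PRG.intro[OF assms]] .

end
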